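(* Consider the triangle graph with vertices $s,o,v$ and edges $\{s,o\},\{s,v\},\{v,o\}$, whose edge delays $\tau_{\{s,o\}},\tau_{\{s,v\}},\tau_{\{v,o\}}$ are independent exponential random variables with rates $\lambda_1,\lambda_2,\lambda_3>0$ respectively, and an SI infection started at $s$ at time $0$, so that $\tau_o=\min\{\tau_{\{s,o\}},\tau_{\{s,v\}}+\tau_{\{v,o\}}\}$ and $\tau_v=\min\{\tau_{\{s,v\}},\tau_{\{s,o\}}+\tau_{\{o,v\}}\}$. Let $\mathbb{T}$ be the random infection spanning tree defined in the context. Then $$\mathbb{P}(\mathbb{T}=T_1)=\frac{\lambda_1\lambda_3}{(\lambda_1+\lambda_2)(\lambda_2+\lambda_3)},\quad \mathbb{P}(\mathbb{T}=T_2)=\frac{\lambda_2\lambda_3}{(\lambda_1+\lambda_2)(\lambda_1+\lambda_3)},$$ $$\mathbb{P}(\mathbb{T}=T_3)=\frac{\lambda_1\lambda_2(\lambda_1+\lambda_2+2\lambda_3)}{(\lambda_1+\lambda_2)(\lambda_2+\lambda_3)(\lambda_3+\lambda_1)}.$$ Moreover, the conditional distribution of $\tau_o$ given $\mathbb{T}$ is: given $\mathbb{T}=T_1$, $\mathrm{Exponential}(\lambda_1+\lambda_2)$; given $\mathbb{T}=T_2$, the law of $X+Y$ with $X\sim\mathrm{Exponential}(\lambda_1+\lambda_2)$ and $Y\sim\mathrm{Exponential}(\lambda_1+\lambda_3)$ independent; given $\mathbb{T}=T_3$, the law of $X+BY$ with $X\sim\mathrm{Exponential}(\lambda_1+\lambda_2)$,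 $Y\sim\mathrm{Exponential}(\lambda_1+\lambda_3)$ and $B$ a Bernoulli random variable with $\mathbb{P}(B=1)=(\lambda_2+\lambda_3)/(\lambda_1+\lambda_2+2\lambda_3)$, all three independent.
   Context: The three spanning trees of the triangle are $T_1$ with edges $\{s,o\},\{o,v\}$; $T_2$ with edges $\{s,v\},\{v,o\}$; $T_3$ with edges $\{s,v\},\{s,o\}$. The random tree $\mathbb{T}$ records through which edges the nodes $o$ and $v$ got infected: $\mathbb{T}=T_1$ if $v$ is infected through $o$, i.e., $\tau_{\{s,o\}}+\tau_{\{o,v\}}<\tau_{\{s,v\}}$; $\mathbb{T}=T_2$ if $o$ is infected through $v$, i.e., $\tau_{\{s,v\}}+\tau_{\{v,o\}}<\tau_{\{s,o\}}$; and $\mathbb{T}=T_3$ otherwise (both $o$ and $v$ infected directly by $s$). *)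

theory Defs
  imports "HOL-Probability.Probability"
begin

datatype spanning_tree = T1 | T2 | T3

text \<open>Arguments: a = delay of edge {s,o}, b = delay of edge {s,v}, c = delay of edge {v,o}.\<close>
definition infection_tree :: "real \<Rightarrow> real \<Rightarrow> real \<Rightarrow> spanning_tree" where
  "infection_tree a b c =
     (if a + c < b then T1 else if b + c < a then T2 else T3)"

definition infection_time_o :: "real \<Rightarrow> real \<Rightarrow> real \<Rightarrow> real" where
  "infection_time_o a b c = min a (b + c)"

definition infection_time_v :: "real \<Rightarrow> real \<Rightarrow> real \<Rightarrow> real" where
  "infection_time_v a b c = min b (a + c)"

definition exp_law :: "real \<Rightarrow> real measure" where
  "exp_law l = density lborel (exponential_density l)"

definition sum_law :: "real \<Rightarrow> real \<Rightarrow> real measure" where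
  "sum_law l m = distr (exp_law l \<Otimes>\<^sub>M exp_law m) borel (\<lambda>(x, y). x + y)"

definition mixed_law :: "real \<Rightarrow> real \<Rightarrow> real \<Rightarrow> real measure" where
  "mixed_law l m p = distr (exp_law l \<Otimes>\<^sub>M (exp_law m \<Otimes>\<^sub>M measure_pmf (bernoulli_pmf p))) borel
      (\<lambda>(x, y, b). x + (if b then 1 else 0) * y)"

end

theory Submission
  imports Defs "HOL-Real_Asymp.Real_Asymp"
begin

lemma (in prob_space) indep_split:
  fixes X :: "'i \<Rightarrow> 'a \<Rightarrow> real"
  assumes ind: "indep_vars (\<lambda>_. borel) X I" and ijk: "i \<in> I" "j \<in> I" "k \<in> I" "i \<noteq> j" "i \<noteq> k" "j \<noteq> k"
  shows "distr M lborel (X i) \<Otimes>\<^sub>M distr M (lborel \<Otimes>\<^sub>M lborel) (\<lambda>\<omega>. (X j \<omega>, X k \<omega>)) =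
         distr M (lborel \<Otimes>\<^sub>M (lborel \<Otimes>\<^sub>M lborel)) (\<lambda>\<omega>. (X i \<omega>, (X j \<omega>, X k \<omega>)))"
    and "indep_var lborel (X j) lborel (X k)"
proof -
  have rv: "\<And>l. l \<in> I \<Longrightarrow> random_variable borel (X l)" using ind by (auto simp: indep_vars_def)
  have [measurable]: "X i \<in> borel_measurable M" "X j \<in> borel_measurable M" "X k \<in> borel_measurable M"
    using rv ijk by auto
  have r1: "indep_var (PiM {i} (\<lambda>_. borel)) (\<lambda>\<omega>. restrict (\<lambda>i. X i \<omega>) {i})
     (PiM {j,k} (\<lambda>_. borel)) (\<lambda>\<omega>. restrict (\<lambda>i. X i \<omega>) {j,k})"
    by (rule indep_var_restrict[OF ind]) (use ijk in auto)
  show "distr M lborel (X i) \<Otimes>\<^sub>M distr M (lborel \<Otimes>\<^sub>M lborel) (\<lambda>\<omega>. (X j \<omega>, X k \<omega>)) =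
         distr M (lborel \<Otimes>\<^sub>M (lborel \<Otimes>\<^sub>M lborel)) (\<lambda>\<omega>. (X i \<omega>, (X j \<omega>, X k \<omega>)))"
  proof (rule pair_measure_eqI)
    show "sigma_finite_measure (distr M lborel (X i))"
      by (rule prob_space_imp_sigma_finite, rule prob_space_distr) simp
    show "sigma_finite_measure (distr M (lborel \<Otimes>\<^sub>M lborel) (\<lambda>\<omega>. (X j \<omega>, X k \<omega>)))"
      by (rule prob_space_imp_sigma_finite, rule prob_space_distr) simp
    show "sets (distr M lborel (X i) \<Otimes>\<^sub>M distr M (lborel \<Otimes>\<^sub>M lborel) (\<lambda>\<omega>. (X j \<omega>, X k \<omega>))) =
      sets (distr M (lborel \<Otimes>\<^sub>M (lborel \<Otimes>\<^sub>M lborel)) (\<lambda>\<omega>. (X i \<omega>, (X j \<omega>, X k \<omega>))))"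
      unfolding sets_distr by (rule sets_pair_measure_cong) auto
  next
    fix A B assume A: "A \<in> sets (distr M lborel (X i))" and B: "B \<in> sets (distr M (lborel \<Otimes>\<^sub>M lborel) (\<lambda>\<omega>. (X j \<omega>, X k \<omega>)))"
    then have A': "A \<in> sets borel" and B': "B \<in> sets (borel \<Otimes>\<^sub>M borel)" by auto
    let ?Xa = "{f \<in> space (PiM {i} (\<lambda>_. borel :: real measure)). f i \<in> A}"
    let ?Xb = "{f \<in> space (PiM {j,k} (\<lambda>_. borel :: real measure)). (f j, f k) \<in> B}"
    have sa: "?Xa \<in> sets (PiM {i} (\<lambda>_. borel :: real measure))"
      using A' by measurable
    have sb: "?Xb \<in> sets (PiM {j,k} (\<lambda>_. borel :: real measure))"
      using B' by measurable
    have e1: "(\<lambda>x. (\<lambda>i\<in>{i}. X i x, \<lambda>i\<in>{j, k}. X i x)) -` (?Xa \<times> ?Xb) \<inter> space M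
        = (\<lambda>\<omega>. (X i \<omega>, (X j \<omega>, X k \<omega>))) -` (A \<times> B) \<inter> space M"
      by (auto simp: space_PiM)
    have e2: "(\<lambda>\<omega>. restrict (\<lambda>i. X i \<omega>) {i}) -` ?Xa \<inter> space M = X i -` A \<inter> space M"
      by (auto simp: space_PiM)
    have e3: "(\<lambda>\<omega>. restrict (\<lambda>i. X i \<omega>) {j,k}) -` ?Xb \<inter> space M = (\<lambda>\<omega>. (X j \<omega>, X k \<omega>)) -` B \<inter> space M"
      by (auto simp: space_PiM)
    have "prob ((\<lambda>\<omega>. (X i \<omega>, (X j \<omega>, X k \<omega>))) -` (A \<times> B) \<inter> space M) =
        prob (X i -` A \<inter> space M) * prob ((\<lambda>\<omega>. (X j \<omega>, X k \<omega>)) -` B \<inter> space M)"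
      using indep_varD[OF r1 sa sb] unfolding e1 e2 e3 .
    then show "emeasure (distr M lborel (X i)) A * emeasure (distr M (lborel \<Otimes>\<^sub>M lborel) (\<lambda>\<omega>. (X j \<omega>, X k \<omega>))) B =
      emeasure (distr M (lborel \<Otimes>\<^sub>M (lborel \<Otimes>\<^sub>M lborel)) (\<lambda>\<omega>. (X i \<omega>, (X j \<omega>, X k \<omega>)))) (A \<times> B)"
      using A' B' by (simp add: emeasure_distr emeasure_eq_measure ennreal_mult[symmetric])
  qed
  have r2: "indep_var (PiM {j} (\<lambda>_. borel)) (\<lambda>\<omega>. restrict (\<lambda>i. X i \<omega>) {j})
     (PiM {k} (\<lambda>_. borel)) (\<lambda>\<omega>. restrict (\<lambda>i. X i \<omega>) {k})"
    by (rule indep_var_restrict[OF ind]) (use ijk in auto)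
  have m3: "(\<lambda>f. f j) \<in> measurable (PiM {j} (\<lambda>_. borel)) (lborel :: real measure)"
    by simp
  have m4: "(\<lambda>f. f k) \<in> measurable (PiM {k} (\<lambda>_. borel)) (lborel :: real measure)"
    by simp
  have "indep_var lborel ((\<lambda>f. f j) \<circ> (\<lambda>\<omega>. restrict (\<lambda>i. X i \<omega>) {j})) lborel ((\<lambda>f. f k) \<circ> (\<lambda>\<omega>. restrict (\<lambda>i. X i \<omega>) {k}))"
    by (rule indep_var_compose[OF r2 m3 m4])
  moreover have "((\<lambda>f. f j) \<circ> (\<lambda>\<omega>. restrict (\<lambda>i. X i \<omega>) {j})) = X j"
     "((\<lambda>f. f k) \<circ> (\<lambda>\<omega>. restrict (\<lambda>i. X i \<omega>) {k})) = X k"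
    by (auto simp: fun_eq_iff)
  ultimately show "indep_var lborel (X j) lborel (X k)" by simp
qed

lemma (in prob_space) joint3:
  fixes X Y Z :: "'a \<Rightarrow> real"
  assumes DX: "distributed M lborel X fx" and DY: "distributed M lborel Y fy" and DZ: "distributed M lborel Z fz"
    and i1: "distr M lborel X \<Otimes>\<^sub>M distr M (lborel \<Otimes>\<^sub>M lborel) (\<lambda>\<omega>. (Y \<omega>, Z \<omega>)) =
         distr M (lborel \<Otimes>\<^sub>M (lborel \<Otimes>\<^sub>M lborel)) (\<lambda>\<omega>. (X \<omega>, (Y \<omega>, Z \<omega>)))"
    and i2: "indep_var lborel Y lborel Z"
    and g[measurable]: "g \<in> borel_measurable (lborel \<Otimes>\<^sub>M (lborel \<Otimes>\<^sub>M lborel))"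
  shows "(\<integral>\<^sup>+\<omega>. g (X \<omega>, Y \<omega>, Z \<omega>) \<partial>M) =
    (\<integral>\<^sup>+x. \<integral>\<^sup>+y. \<integral>\<^sup>+z. fx x * fy y * fz z * g (x, y, z) \<partial>lborel \<partial>lborel \<partial>lborel)"
proof -
  have DYZ: "distributed M (lborel \<Otimes>\<^sub>M lborel) (\<lambda>\<omega>. (Y \<omega>, Z \<omega>)) (\<lambda>(y, z). fy y * fz z)"
    by (rule distributed_joint_indep[OF _ _ DY DZ i2]) (auto intro: lborel.sigma_finite_measure_axioms)
  have D: "distributed M (lborel \<Otimes>\<^sub>M (lborel \<Otimes>\<^sub>M lborel)) (\<lambda>\<omega>. (X \<omega>, (Y \<omega>, Z \<omega>)))
     (\<lambda>(x, yz). fx x * (\<lambda>(y, z). fy y * fz z) yz)"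
    by (rule distributed_joint_indep'[OF _ _ DX DYZ i1]) (auto intro: lborel.sigma_finite_measure_axioms sigma_finite_pair_measure)
  have mf[measurable]: "(\<lambda>(x, yz). fx x * (\<lambda>(y, z). fy y * fz z) yz) \<in> borel_measurable (lborel \<Otimes>\<^sub>M (lborel \<Otimes>\<^sub>M lborel))"
    using D by (rule distributed_borel_measurable)
  have mX[measurable]: "fx \<in> borel_measurable lborel" using DX by (rule distributed_borel_measurable)
  have mY[measurable]: "fy \<in> borel_measurable lborel" using DY by (rule distributed_borel_measurable)
  have mZ[measurable]: "fz \<in> borel_measurable lborel" using DZ by (rule distributed_borel_measurable)
  have sfp: "sigma_finite_measure (lborel \<Otimes>\<^sub>M lborel :: (real \<times> real) measure)"
    by (intro sigma_finite_pair_measure lborel.sigma_finite_measure_axioms)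
  have "(\<integral>\<^sup>+\<omega>. g (X \<omega>, Y \<omega>, Z \<omega>) \<partial>M) = (\<integral>\<^sup>+v. g v \<partial>distr M (lborel \<Otimes>\<^sub>M (lborel \<Otimes>\<^sub>M lborel)) (\<lambda>\<omega>. (X \<omega>, (Y \<omega>, Z \<omega>))))"
    using D by (subst nn_integral_distr) (auto dest: distributed_measurable)
  also have "\<dots> = (\<integral>\<^sup>+v. (\<lambda>(x, yz). fx x * (\<lambda>(y, z). fy y * fz z) yz) v * g v \<partial>(lborel \<Otimes>\<^sub>M (lborel \<Otimes>\<^sub>M lborel)))"
    using D by (simp add: distributed_distr_eq_density nn_integral_density)
  also have "\<dots> = (\<integral>\<^sup>+x. \<integral>\<^sup>+yz. (\<lambda>(x, yz). fx x * (\<lambda>(y, z). fy y * fz z) yz) (x, yz) * g (x, yz) \<partial>(lborel \<Otimes>\<^sub>M lborel) \<partial>lborel)"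
    by (subst sigma_finite_measure.nn_integral_fst[symmetric, OF sfp]) auto
  also have "\<dots> = (\<integral>\<^sup>+x. \<integral>\<^sup>+y. \<integral>\<^sup>+z. fx x * fy y * fz z * g (x, y, z) \<partial>lborel \<partial>lborel \<partial>lborel)"
    apply (rule nn_integral_cong)
    apply (subst lborel.nn_integral_fst[symmetric])
    apply (auto intro!: nn_integral_cong simp: mult.assoc)
    done
  finally show ?thesis .
qed

lemma (in prob_space) joint_event:
  fixes X Y Z :: "'a \<Rightarrow> real" and Q :: "real \<Rightarrow> real \<Rightarrow> real \<Rightarrow> bool"
  assumes DX: "distributed M lborel X (\<lambda>x. ennreal (fx x))" and DY: "distributed M lborel Y (\<lambda>x. ennreal (fy x))"
    and DZ: "distributed M lborel Z (\<lambda>x. ennreal (fz x))"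
    and nn: "\<And>x. 0 \<le> fx x" "\<And>x. 0 \<le> fy x" "\<And>x. 0 \<le> fz x"
    and i1: "distr M lborel X \<Otimes>\<^sub>M distr M (lborel \<Otimes>\<^sub>M lborel) (\<lambda>\<omega>. (Y \<omega>, Z \<omega>)) =
         distr M (lborel \<Otimes>\<^sub>M (lborel \<Otimes>\<^sub>M lborel)) (\<lambda>\<omega>. (X \<omega>, (Y \<omega>, Z \<omega>)))"
    and i2: "indep_var lborel Y lborel Z"
    and Q[measurable]: "Measurable.pred (lborel \<Otimes>\<^sub>M (lborel \<Otimes>\<^sub>M lborel)) (\<lambda>(x, y, z). Q x y z)"
  shows "emeasure M {\<omega> \<in> space M. Q (X \<omega>) (Y \<omega>) (Z \<omega>)} =
    (\<integral>\<^sup>+x. \<integral>\<^sup>+y. \<integral>\<^sup>+z. ennreal (fx x * fy y * fz z * of_bool (Q x y z)) \<partial>lborel \<partial>lborel \<partial>lborel)"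
proof -
  have [measurable]: "X \<in> borel_measurable M" "Y \<in> borel_measurable M" "Z \<in> borel_measurable M"
    using DX DY DZ by (auto dest!: distributed_measurable)
  have m: "(\<lambda>v. indicator {v. Q (fst v) (fst (snd v)) (snd (snd v))} v :: ennreal) \<in> borel_measurable (lborel \<Otimes>\<^sub>M (lborel \<Otimes>\<^sub>M lborel))"
  proof -
    have "{v \<in> space (lborel \<Otimes>\<^sub>M (lborel \<Otimes>\<^sub>M lborel)). (\<lambda>(x, y, z). Q x y z) v} \<in> sets (lborel \<Otimes>\<^sub>M (lborel \<Otimes>\<^sub>M lborel))"
      by measurable
    then show ?thesis by (simp add: space_pair_measure case_prod_beta)
  qed
  have Pm: "Measurable.pred M (\<lambda>\<omega>. Q (X \<omega>) (Y \<omega>) (Z \<omega>))"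
  proof -
    have "(\<lambda>\<omega>. (X \<omega>, Y \<omega>, Z \<omega>)) \<in> measurable M (lborel \<Otimes>\<^sub>M (lborel \<Otimes>\<^sub>M lborel))" by measurable
    from measurable_compose[OF this Q] show ?thesis by simp
  qed
  have "emeasure M {\<omega> \<in> space M. Q (X \<omega>) (Y \<omega>) (Z \<omega>)} = (\<integral>\<^sup>+\<omega>. indicator {\<omega> \<in> space M. Q (X \<omega>) (Y \<omega>) (Z \<omega>)} \<omega> \<partial>M)"
    using Pm by simp
  also have "\<dots> = (\<integral>\<^sup>+\<omega>. (\<lambda>v. indicator {v. Q (fst v) (fst (snd v)) (snd (snd v))} v) (X \<omega>, Y \<omega>, Z \<omega>) \<partial>M)"
    by (intro nn_integral_cong) (auto simp: indicator_def)
  also have "\<dots> = (\<integral>\<^sup>+x. \<integral>\<^sup>+y. \<integral>\<^sup>+z. ennreal (fx x) * ennreal (fy y) * ennreal (fz z) * (\<lambda>v. indicator {v. Q (fst v) (fst (snd v)) (snd (snd v))} v) (x, y, z) \<partial>lborel \<partial>lborel \<partial>lborel)"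
    by (rule joint3[OF DX DY DZ i1 i2 m])
  also have "\<dots> = (\<integral>\<^sup>+x. \<integral>\<^sup>+y. \<integral>\<^sup>+z. ennreal (fx x * fy y * fz z * of_bool (Q x y z)) \<partial>lborel \<partial>lborel \<partial>lborel)"
    by (intro nn_integral_cong) (simp add: ennreal_mult nn indicator_def)
  finally show ?thesis .
qed

lemma tail_exp:
  assumes k: "k > 0" and C: "C \<ge> 0"
  shows "(\<integral>\<^sup>+y. ennreal (C * exp (- k * y) * indicator {t..} y) \<partial>lborel) = ennreal (C * exp (- k * t) / k)"
proof -
  have "(\<integral>\<^sup>+y. ennreal (C * exp (- k * y)) * indicator {t..} y \<partial>lborel) = ennreal (0 - (- C * exp (- k * t) / k))"
  proof (rule nn_integral_FTC_atLeast)
    show "(\<lambda>y. C * exp (- k * y)) \<in> borel_measurable borel" by measurable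
    fix x
    show "((\<lambda>y. - C * exp (- k * y) / k) has_real_derivative C * exp (- k * x)) (at x)"
      using k by (auto intro!: derivative_eq_intros simp: field_simps)
    show "0 \<le> C * exp (- k * x)" using C by simp
  next
    have "((\<lambda>y. - C / k * exp (- k * y)) \<longlongrightarrow> - C / k * 0) at_top"
      using k by (intro tendsto_mult tendsto_const) real_asymp
    then show "((\<lambda>y. - C * exp (- k * y) / k) \<longlongrightarrow> 0) at_top" by (simp add: field_simps)
  qed
  then show ?thesis
    by (simp add: indicator_mult_ennreal mult.commute)
qed

lemma tail_exp_strict:
  assumes k: "k > 0" and C: "C \<ge> 0"
  shows "(\<integral>\<^sup>+y. ennreal (C * exp (- k * y) * indicator {t<..} y) \<partial>lborel) = ennreal (C * exp (- k * t) / k)"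
proof -
  have "(\<integral>\<^sup>+y. ennreal (C * exp (- k * y) * indicator {t<..} y) \<partial>lborel) =
        (\<integral>\<^sup>+y. ennreal (C * exp (- k * y) * indicator {t..} y) \<partial>lborel)"
    by (intro nn_integral_cong_AE, use AE_lborel_singleton[of t] in eventually_elim) (auto simp: indicator_def)
  then show ?thesis using tail_exp[OF k C] by simp
qed

lemma exp_combine: "y \<ge> 0 \<Longrightarrow> exponential_density l y * exp (- k * y) = l * exp (- (l + k) * y)"
proof -
  assume "y \<ge> 0"
  have "exp (- y * l) * exp (- k * y) = exp (- y * l + - k * y)" by (rule exp_add[symmetric])
  also have "- y * l + - k * y = - (l + k) * y" by (simp add: algebra_simps)
  finally show ?thesis using \<open>y \<ge> 0\<close> by (simp add: exponential_density_def)
qed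

lemma tail_dens:
  assumes l: "l > 0" and lk: "l + k > 0" and C: "C \<ge> 0" and t: "C \<noteq> 0 \<Longrightarrow> 0 \<le> t"
  shows "(\<integral>\<^sup>+y. ennreal (C * exponential_density l y * exp (- k * y) * indicator {t..} y) \<partial>lborel)
     = ennreal (C * l * exp (- (l + k) * t) / (l + k))"
proof (cases "C = 0")
  case True then show ?thesis by simp
next
  case False
  then have t0: "0 \<le> t" by (rule t)
  have "(\<integral>\<^sup>+y. ennreal (C * exponential_density l y * exp (- k * y) * indicator {t..} y) \<partial>lborel)
     = (\<integral>\<^sup>+y. ennreal ((C * l) * exp (- (l + k) * y) * indicator {t..} y) \<partial>lborel)"
  proof (intro nn_integral_cong)
    fix y :: real
    show "ennreal (C * exponential_density l y * exp (- k * y) * indicator {t..} y) =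
          ennreal ((C * l) * exp (- (l + k) * y) * indicator {t..} y)"
    proof (cases "t \<le> y")
      case True
      then have e: "exponential_density l y * exp (- k * y) = l * exp (- (l + k) * y)"
        using t0 by (intro exp_combine) simp
      have "C * exponential_density l y * exp (- k * y) * indicator {t..} y =
         C * (exponential_density l y * exp (- k * y)) * indicator {t..} y" by (simp only: mult.assoc)
      also have "\<dots> = (C * l) * exp (- (l + k) * y) * indicator {t..} y" by (simp only: e mult.assoc)
      finally show ?thesis by (rule arg_cong)
    qed (simp add: indicator_def)
  qed
  also have "\<dots> = ennreal (C * l * exp (- (l + k) * t) / (l + k))"
    using l C lk by (intro tail_exp) auto
  finally show ?thesis .
qed

lemma tail_dens_strict:
  assumes l: "l > 0" and lk: "l + k > 0" and C: "C \<ge> 0" and t: "C \<noteq> 0 \<Longrightarrow> 0 \<le> t"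
  shows "(\<integral>\<^sup>+y. ennreal (C * exponential_density l y * exp (- k * y) * indicator {t<..} y) \<partial>lborel)
     = ennreal (C * l * exp (- (l + k) * t) / (l + k))"
proof -
  have "(\<integral>\<^sup>+y. ennreal (C * exponential_density l y * exp (- k * y) * indicator {t<..} y) \<partial>lborel) =
        (\<integral>\<^sup>+y. ennreal (C * exponential_density l y * exp (- k * y) * indicator {t..} y) \<partial>lborel)"
    by (intro nn_integral_cong_AE, use AE_lborel_singleton[of t] in eventually_elim) (auto simp: indicator_def)
  then show ?thesis using tail_dens[OF assms] by simp
qed

lemma full_dens:
  assumes l: "l > 0" and lk: "l + k > 0" and C: "C \<ge> 0"
  shows "(\<integral>\<^sup>+y. ennreal (C * exponential_density l y * exp (- k * y)) \<partial>lborel) = ennreal (C * l / (l + k))"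
proof -
  have "(\<integral>\<^sup>+y. ennreal (C * exponential_density l y * exp (- k * y)) \<partial>lborel) =
     (\<integral>\<^sup>+y. ennreal (C * exponential_density l y * exp (- k * y) * indicator {0..} y) \<partial>lborel)"
    by (intro nn_integral_cong) (auto simp: indicator_def exponential_density_def)
  also have "\<dots> = ennreal (C * l * exp (- (l + k) * 0) / (l + k))"
    by (rule tail_dens[OF l lk C]) simp
  finally show ?thesis by simp
qed

lemma L1:
  fixes l1 l2 l3 :: real
  assumes l: "l1 > 0" "l2 > 0" "l3 > 0" and A[measurable]: "A \<in> sets borel"
  shows "(\<integral>\<^sup>+x. \<integral>\<^sup>+y. \<integral>\<^sup>+z. ennreal (exponential_density l1 x * exponential_density l2 y * exponential_density l3 z *
            of_bool (min x (y + z) \<in> A \<and> x + z < y)) \<partial>lborel \<partial>lborel \<partial>lborel)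
       = (\<integral>\<^sup>+x. ennreal (exponential_density l1 x * indicator A x * exp (- l2 * x) * (l3 / (l3 + l2))) \<partial>lborel)"
proof (intro nn_integral_cong)
  fix x :: real
  have "(\<integral>\<^sup>+y. \<integral>\<^sup>+z. ennreal (exponential_density l1 x * exponential_density l2 y * exponential_density l3 z *
            of_bool (min x (y + z) \<in> A \<and> x + z < y)) \<partial>lborel \<partial>lborel) =
        (\<integral>\<^sup>+z. \<integral>\<^sup>+y. ennreal (exponential_density l1 x * exponential_density l2 y * exponential_density l3 z *
            of_bool (min x (y + z) \<in> A \<and> x + z < y)) \<partial>lborel \<partial>lborel)"
    by (rule lborel_pair.Fubini') measurable
  also have "\<dots> = (\<integral>\<^sup>+z. ennreal ((exponential_density l1 x * exponential_density l3 z * indicator A x) * l2 * exp (- (l2 + 0) * (x + z)) / (l2 + 0)) \<partial>lborel)"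
  proof (intro nn_integral_cong)
    fix z :: real
    have "(\<integral>\<^sup>+y. ennreal (exponential_density l1 x * exponential_density l2 y * exponential_density l3 z *
            of_bool (min x (y + z) \<in> A \<and> x + z < y)) \<partial>lborel) =
          (\<integral>\<^sup>+y. ennreal ((exponential_density l1 x * exponential_density l3 z * indicator A x) * exponential_density l2 y * exp (- 0 * y) * indicator {x + z<..} y) \<partial>lborel)"
      by (intro nn_integral_cong) (auto simp: indicator_def exponential_density_def mult_ac)
    also have "\<dots> = ennreal ((exponential_density l1 x * exponential_density l3 z * indicator A x) * l2 * exp (- (l2 + 0) * (x + z)) / (l2 + 0))"
      using l by (intro tail_dens_strict) (auto simp: exponential_density_def split: if_splits)
    finally show "(\<integral>\<^sup>+y. ennreal (exponential_density l1 x * exponential_density l2 y * exponential_density l3 z *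
            of_bool (min x (y + z) \<in> A \<and> x + z < y)) \<partial>lborel) = ennreal ((exponential_density l1 x * exponential_density l3 z * indicator A x) * l2 * exp (- (l2 + 0) * (x + z)) / (l2 + 0))" .
  qed
  also have "\<dots> = (\<integral>\<^sup>+z. ennreal ((exponential_density l1 x * indicator A x * exp (- l2 * x)) * exponential_density l3 z * exp (- l2 * z)) \<partial>lborel)"
  proof (intro nn_integral_cong)
    fix z :: real
    have "exp (- l2 * (x + z)) = exp (- l2 * x) * exp (- l2 * z)"
      by (simp add: exp_add[symmetric] algebra_simps)
    then show "ennreal ((exponential_density l1 x * exponential_density l3 z * indicator A x) * l2 * exp (- (l2 + 0) * (x + z)) / (l2 + 0)) =
       ennreal ((exponential_density l1 x * indicator A x * exp (- l2 * x)) * exponential_density l3 z * exp (- l2 * z))"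
      using l by (simp add: field_simps)
  qed
  also have "\<dots> = ennreal ((exponential_density l1 x * indicator A x * exp (- l2 * x)) * l3 / (l3 + l2))"
    using l by (intro full_dens) (auto simp: exponential_density_def)
  finally show "(\<integral>\<^sup>+y. \<integral>\<^sup>+z. ennreal (exponential_density l1 x * exponential_density l2 y * exponential_density l3 z *
            of_bool (min x (y + z) \<in> A \<and> x + z < y)) \<partial>lborel \<partial>lborel) =
     ennreal (exponential_density l1 x * indicator A x * exp (- l2 * x) * (l3 / (l3 + l2)))"
    by simp
qed

lemma L2:
  fixes l1 l2 l3 :: real
  assumes l: "l1 > 0" "l2 > 0" "l3 > 0" and A[measurable]: "A \<in> sets borel"
  shows "(\<integral>\<^sup>+u. \<integral>\<^sup>+v. \<integral>\<^sup>+w. ennreal (exponential_density l2 u * exponential_density l3 v * exponential_density l1 w *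
            of_bool (min w (u + v) \<in> A \<and> \<not> w + v < u \<and> u + v < w)) \<partial>lborel \<partial>lborel \<partial>lborel)
       = (\<integral>\<^sup>+u. \<integral>\<^sup>+v. ennreal (exponential_density l2 u * exponential_density l3 v * indicator A (u + v) * exp (- l1 * (u + v))) \<partial>lborel \<partial>lborel)"
proof (intro nn_integral_cong)
  fix u v :: real
  have "(\<integral>\<^sup>+w. ennreal (exponential_density l2 u * exponential_density l3 v * exponential_density l1 w *
            of_bool (min w (u + v) \<in> A \<and> \<not> w + v < u \<and> u + v < w)) \<partial>lborel) =
        (\<integral>\<^sup>+w. ennreal ((exponential_density l2 u * exponential_density l3 v * indicator A (u + v)) * exponential_density l1 w * exp (- 0 * w) * indicator {u + v<..} w) \<partial>lborel)"
    by (intro nn_integral_cong) (auto simp: indicator_def exponential_density_def mult_ac)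
  also have "\<dots> = ennreal ((exponential_density l2 u * exponential_density l3 v * indicator A (u + v)) * l1 * exp (- (l1 + 0) * (u + v)) / (l1 + 0))"
    using l by (intro tail_dens_strict) (auto simp: exponential_density_def split: if_splits)
  also have "\<dots> = ennreal (exponential_density l2 u * exponential_density l3 v * indicator A (u + v) * exp (- l1 * (u + v)))"
    using l by simp
  finally show "(\<integral>\<^sup>+w. ennreal (exponential_density l2 u * exponential_density l3 v * exponential_density l1 w *
            of_bool (min w (u + v) \<in> A \<and> \<not> w + v < u \<and> u + v < w)) \<partial>lborel) =
        ennreal (exponential_density l2 u * exponential_density l3 v * indicator A (u + v) * exp (- l1 * (u + v)))" .
qed

lemma L3a:
  fixes l1 l2 l3 :: real
  assumes l: "l1 > 0" "l2 > 0" "l3 > 0" and A[measurable]: "A \<in> sets borel"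
  shows "(\<integral>\<^sup>+x. \<integral>\<^sup>+y. \<integral>\<^sup>+z. ennreal (exponential_density l1 x * exponential_density l2 y * exponential_density l3 z *
            of_bool (min x (y + z) \<in> A \<and> \<not> x + z < y \<and> \<not> y + z < x \<and> \<not> y \<le> x)) \<partial>lborel \<partial>lborel \<partial>lborel)
       = (\<integral>\<^sup>+x. ennreal (exponential_density l1 x * indicator A x * (l2 / (l2 + l3)) * exp (- l2 * x)) \<partial>lborel)"
proof (intro nn_integral_cong)
  fix x :: real
  have "(\<integral>\<^sup>+y. \<integral>\<^sup>+z. ennreal (exponential_density l1 x * exponential_density l2 y * exponential_density l3 z *
            of_bool (min x (y + z) \<in> A \<and> \<not> x + z < y \<and> \<not> y + z < x \<and> \<not> y \<le> x)) \<partial>lborel \<partial>lborel) =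
       (\<integral>\<^sup>+y. ennreal ((exponential_density l1 x * exponential_density l2 y * indicator A x * of_bool (x < y)) * l3 * exp (- (l3 + 0) * (y - x)) / (l3 + 0)) \<partial>lborel)"
  proof (intro nn_integral_cong)
    fix y :: real
    have "(\<integral>\<^sup>+z. ennreal (exponential_density l1 x * exponential_density l2 y * exponential_density l3 z *
            of_bool (min x (y + z) \<in> A \<and> \<not> x + z < y \<and> \<not> y + z < x \<and> \<not> y \<le> x)) \<partial>lborel) =
       (\<integral>\<^sup>+z. ennreal ((exponential_density l1 x * exponential_density l2 y * indicator A x * of_bool (x < y)) * exponential_density l3 z * exp (- 0 * z) * indicator {y - x..} z) \<partial>lborel)"
      by (intro nn_integral_cong) (auto simp: indicator_def exponential_density_def mult_ac)
    also have "\<dots> = ennreal ((exponential_density l1 x * exponential_density l2 y * indicator A x * of_bool (x < y)) * l3 * exp (- (l3 + 0) * (y - x)) / (l3 + 0))"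
      using l by (intro tail_dens) (auto simp: exponential_density_def split: if_splits)
    finally show "(\<integral>\<^sup>+z. ennreal (exponential_density l1 x * exponential_density l2 y * exponential_density l3 z *
            of_bool (min x (y + z) \<in> A \<and> \<not> x + z < y \<and> \<not> y + z < x \<and> \<not> y \<le> x)) \<partial>lborel) =
       ennreal ((exponential_density l1 x * exponential_density l2 y * indicator A x * of_bool (x < y)) * l3 * exp (- (l3 + 0) * (y - x)) / (l3 + 0))" .
  qed
  also have "\<dots> = (\<integral>\<^sup>+y. ennreal ((exponential_density l1 x * indicator A x * exp (l3 * x)) * exponential_density l2 y * exp (- l3 * y) * indicator {x<..} y) \<partial>lborel)"
  proof (intro nn_integral_cong)
    fix y :: real
    have "exp (- l3 * (y - x)) = exp (l3 * x) * exp (- l3 * y)"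
      by (simp add: exp_add[symmetric] algebra_simps)
    then show "ennreal ((exponential_density l1 x * exponential_density l2 y * indicator A x * of_bool (x < y)) * l3 * exp (- (l3 + 0) * (y - x)) / (l3 + 0)) =
      ennreal ((exponential_density l1 x * indicator A x * exp (l3 * x)) * exponential_density l2 y * exp (- l3 * y) * indicator {x<..} y)"
      using l by (simp add: indicator_def mult_ac)
  qed
  also have "\<dots> = ennreal ((exponential_density l1 x * indicator A x * exp (l3 * x)) * l2 * exp (- (l2 + l3) * x) / (l2 + l3))"
    using l by (intro tail_dens_strict) (auto simp: exponential_density_def split: if_splits)
  also have "\<dots> = ennreal (exponential_density l1 x * indicator A x * (l2 / (l2 + l3)) * exp (- l2 * x))"
  proof -
    have "exp (l3 * x) * exp (- (l2 + l3) * x) = exp (- l2 * x)"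
      by (simp add: exp_add[symmetric] algebra_simps)
    then show ?thesis by (simp add: field_simps)
  qed
  finally show "(\<integral>\<^sup>+y. \<integral>\<^sup>+z. ennreal (exponential_density l1 x * exponential_density l2 y * exponential_density l3 z *
            of_bool (min x (y + z) \<in> A \<and> \<not> x + z < y \<and> \<not> y + z < x \<and> \<not> y \<le> x)) \<partial>lborel \<partial>lborel) =
        ennreal (exponential_density l1 x * indicator A x * (l2 / (l2 + l3)) * exp (- l2 * x))" .
qed

lemma L3b:
  fixes l1 l2 l3 :: real
  assumes l: "l1 > 0" "l2 > 0" "l3 > 0" and A[measurable]: "A \<in> sets borel"
  shows "(\<integral>\<^sup>+y. \<integral>\<^sup>+x. \<integral>\<^sup>+z. ennreal (exponential_density l2 y * exponential_density l1 x * exponential_density l3 z *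
            of_bool (min x (y + z) \<in> A \<and> \<not> x + z < y \<and> \<not> y + z < x \<and> y \<le> x)) \<partial>lborel \<partial>lborel \<partial>lborel)
       = (\<integral>\<^sup>+y. \<integral>\<^sup>+w. ennreal (exponential_density l2 y * exponential_density l1 (y + w) * indicator A (y + w) * of_bool (0 \<le> w) * exp (- l3 * w)) \<partial>lborel \<partial>lborel)"
proof (rule nn_integral_cong)
  fix y :: real
  have "(\<integral>\<^sup>+x. \<integral>\<^sup>+z. ennreal (exponential_density l2 y * exponential_density l1 x * exponential_density l3 z *
            of_bool (min x (y + z) \<in> A \<and> \<not> x + z < y \<and> \<not> y + z < x \<and> y \<le> x)) \<partial>lborel \<partial>lborel) =
       (\<integral>\<^sup>+x. ennreal (exponential_density l2 y * exponential_density l1 x * indicator A x * of_bool (y \<le> x) * exp (- l3 * (x - y))) \<partial>lborel)"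
  proof (intro nn_integral_cong)
    fix x :: real
    have "(\<integral>\<^sup>+z. ennreal (exponential_density l2 y * exponential_density l1 x * exponential_density l3 z *
            of_bool (min x (y + z) \<in> A \<and> \<not> x + z < y \<and> \<not> y + z < x \<and> y \<le> x)) \<partial>lborel) =
       (\<integral>\<^sup>+z. ennreal ((exponential_density l2 y * exponential_density l1 x * indicator A x * of_bool (y \<le> x)) * exponential_density l3 z * exp (- 0 * z) * indicator {x - y..} z) \<partial>lborel)"
      by (intro nn_integral_cong) (auto simp: indicator_def exponential_density_def mult_ac)
    also have "\<dots> = ennreal ((exponential_density l2 y * exponential_density l1 x * indicator A x * of_bool (y \<le> x)) * l3 * exp (- (l3 + 0) * (x - y)) / (l3 + 0))"
      using l by (intro tail_dens) (auto simp: exponential_density_def split: if_splits)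
    finally show "(\<integral>\<^sup>+z. ennreal (exponential_density l2 y * exponential_density l1 x * exponential_density l3 z *
            of_bool (min x (y + z) \<in> A \<and> \<not> x + z < y \<and> \<not> y + z < x \<and> y \<le> x)) \<partial>lborel) =
       ennreal (exponential_density l2 y * exponential_density l1 x * indicator A x * of_bool (y \<le> x) * exp (- l3 * (x - y)))"
      using l by simp
  qed
  also have "\<dots> = ennreal \<bar>1::real\<bar> * (\<integral>\<^sup>+w. ennreal (exponential_density l2 y * exponential_density l1 (y + 1 * w) * indicator A (y + 1 * w) * of_bool (y \<le> y + 1 * w) * exp (- l3 * ((y + 1 * w) - y))) \<partial>lborel)"
    by (rule nn_integral_real_affine) auto
  also have "\<dots> = (\<integral>\<^sup>+w. ennreal (exponential_density l2 y * exponential_density l1 (y + w) * indicator A (y + w) * of_bool (0 \<le> w) * exp (- l3 * w)) \<partial>lborel)"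
    by simp
  finally show "(\<integral>\<^sup>+x. \<integral>\<^sup>+z. ennreal (exponential_density l2 y * exponential_density l1 x * exponential_density l3 z *
            of_bool (min x (y + z) \<in> A \<and> \<not> x + z < y \<and> \<not> y + z < x \<and> y \<le> x)) \<partial>lborel \<partial>lborel) =
       (\<integral>\<^sup>+w. ennreal (exponential_density l2 y * exponential_density l1 (y + w) * indicator A (y + w) * of_bool (0 \<le> w) * exp (- l3 * w)) \<partial>lborel)" .
qed

lemma exp_law_prob: "l > 0 \<Longrightarrow> prob_space (exp_law l)"
  unfolding exp_law_def by (rule prob_space_exponential_density)

lemma sets_exp_law[simp, measurable_cong]: "sets (exp_law l) = sets borel"
  by (simp add: exp_law_def)

lemma space_exp_law[simp]: "space (exp_law l) = UNIV"
  by (simp add: exp_law_def)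

lemma R1:
  assumes A: "A \<in> sets borel" and l: "l > 0"
  shows "emeasure (exp_law l) A = (\<integral>\<^sup>+x. ennreal (exponential_density l x * indicator A x) \<partial>lborel)"
  unfolding exp_law_def using A l
  by (subst emeasure_density) (auto intro!: nn_integral_cong simp: ennreal_mult exponential_density_nonneg ennreal_indicator)

lemma nn_integral_exp_law:
  assumes [measurable]: "f \<in> borel_measurable borel" and l: "l > 0"
  shows "(\<integral>\<^sup>+x. f x \<partial>exp_law l) = (\<integral>\<^sup>+x. ennreal (exponential_density l x) * f x \<partial>lborel)"
  unfolding exp_law_def by (subst nn_integral_density) auto

lemma R2:
  assumes A[measurable]: "A \<in> sets borel" and l: "l > 0" and m: "m > 0"
  shows "emeasure (sum_law l m) A = (\<integral>\<^sup>+x. \<integral>\<^sup>+y. ennreal (exponential_density l x * exponential_density m y * indicator A (x + y)) \<partial>lborel \<partial>lborel)"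
proof -
  interpret P: prob_space "exp_law m" using m by (rule exp_law_prob)
  have "emeasure (sum_law l m) A = (\<integral>\<^sup>+w. indicator A w \<partial>sum_law l m)"
    by (simp add: sum_law_def)
  also have "\<dots> = (\<integral>\<^sup>+v. indicator A (case v of (x, y) \<Rightarrow> x + y) \<partial>(exp_law l \<Otimes>\<^sub>M exp_law m))"
    unfolding sum_law_def by (subst nn_integral_distr) auto
  also have "\<dots> = (\<integral>\<^sup>+x. \<integral>\<^sup>+y. indicator A (x + y) \<partial>exp_law m \<partial>exp_law l)"
    by (subst P.nn_integral_fst[symmetric]) auto
  also have "\<dots> = (\<integral>\<^sup>+x. ennreal (exponential_density l x) * \<integral>\<^sup>+y. ennreal (exponential_density m y) * indicator A (x + y) \<partial>lborel \<partial>lborel)"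
    using l m by (simp add: nn_integral_exp_law)
  also have "\<dots> = (\<integral>\<^sup>+x. \<integral>\<^sup>+y. ennreal (exponential_density l x * exponential_density m y * indicator A (x + y)) \<partial>lborel \<partial>lborel)"
    using l m by (auto intro!: nn_integral_cong simp: nn_integral_cmult[symmetric] ennreal_mult exponential_density_nonneg mult.assoc ennreal_indicator)
  finally show ?thesis .
qed

lemma mix_pointwise:
  fixes a b i1 i0 p :: real
  assumes "0 \<le> a" "0 \<le> b" "0 \<le> i1" "0 \<le> i0" "0 \<le> p" "p \<le> 1"
  shows "ennreal a * (ennreal b * ennreal (i1 * p + i0 * (1 - p))) =
    ennreal p * ennreal (a * b * i1) + ennreal (1 - p) * ennreal (a * i0 * b)"
proof -
  have "ennreal a * (ennreal b * ennreal (i1 * p + i0 * (1 - p))) = ennreal (a * (b * (i1 * p + i0 * (1 - p))))"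
    using assms by (simp add: ennreal_mult)
  also have "a * (b * (i1 * p + i0 * (1 - p))) = p * (a * b * i1) + (1 - p) * (a * i0 * b)"
    by (simp add: algebra_simps)
  also have "ennreal \<dots> = ennreal (p * (a * b * i1)) + ennreal ((1 - p) * (a * i0 * b))"
    using assms by (intro ennreal_plus) auto
  also have "\<dots> = ennreal p * ennreal (a * b * i1) + ennreal (1 - p) * ennreal (a * i0 * b)"
    using assms by (simp add: ennreal_mult)
  finally show ?thesis .
qed

lemma R3:
  assumes A[measurable]: "A \<in> sets borel" and l: "l > 0" and m: "m > 0" and p: "0 \<le> p" "p \<le> 1"
  shows "emeasure (mixed_law l m p) A =
    ennreal p * (\<integral>\<^sup>+x. \<integral>\<^sup>+y. ennreal (exponential_density l x * exponential_density m y * indicator A (x + y)) \<partial>lborel \<partial>lborel)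
    + ennreal (1 - p) * (\<integral>\<^sup>+x. ennreal (exponential_density l x * indicator A x) \<partial>lborel)"
proof -
  interpret P: prob_space "exp_law m" using m by (rule exp_law_prob)
  interpret B: prob_space "measure_pmf (bernoulli_pmf p)" by (rule prob_space_measure_pmf)
  interpret PB: pair_prob_space "exp_law m" "measure_pmf (bernoulli_pmf p)" ..
  have sfPB: "sigma_finite_measure (exp_law m \<Otimes>\<^sub>M measure_pmf (bernoulli_pmf p))"
    by (rule prob_space_imp_sigma_finite) (rule PB.prob_space_axioms)
  have "emeasure (mixed_law l m p) A = (\<integral>\<^sup>+w. indicator A w \<partial>mixed_law l m p)"
    by (simp add: mixed_law_def)
  also have "\<dots> = (\<integral>\<^sup>+v. indicator A (case v of (x, y, b) \<Rightarrow> x + (if b then 1 else 0) * y) \<partial>(exp_law l \<Otimes>\<^sub>M (exp_law m \<Otimes>\<^sub>M measure_pmf (bernoulli_pmf p))))"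
    unfolding mixed_law_def by (subst nn_integral_distr) auto
  also have "\<dots> = (\<integral>\<^sup>+x. \<integral>\<^sup>+yb. indicator A (x + (if snd yb then 1 else 0) * fst yb) \<partial>(exp_law m \<Otimes>\<^sub>M measure_pmf (bernoulli_pmf p)) \<partial>exp_law l)"
    by (subst sigma_finite_measure.nn_integral_fst[OF sfPB, symmetric]) (auto simp: case_prod_beta)
  also have "\<dots> = (\<integral>\<^sup>+x. \<integral>\<^sup>+y. \<integral>\<^sup>+b. indicator A (x + (if b then 1 else 0) * y) \<partial>measure_pmf (bernoulli_pmf p) \<partial>exp_law m \<partial>exp_law l)"
    by (intro nn_integral_cong, subst sigma_finite_measure.nn_integral_fst[OF prob_space_imp_sigma_finite[OF prob_space_measure_pmf], symmetric]) auto
  also have "\<dots> = (\<integral>\<^sup>+x. \<integral>\<^sup>+y. ennreal (indicator A (x + y) * p + indicator A x * (1 - p)) \<partial>exp_law m \<partial>exp_law l)"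
    using p by (intro nn_integral_cong) (simp add: ennreal_indicator[symmetric] ennreal_mult)
  also have "\<dots> = (\<integral>\<^sup>+x. ennreal (exponential_density l x) * \<integral>\<^sup>+y. ennreal (exponential_density m y) * ennreal (indicator A (x + y) * p + indicator A x * (1 - p)) \<partial>lborel \<partial>lborel)"
    using l m by (simp add: nn_integral_exp_law)
  also have "\<dots> = (\<integral>\<^sup>+x. \<integral>\<^sup>+y. ennreal p * ennreal (exponential_density l x * exponential_density m y * indicator A (x + y)) + ennreal (1 - p) * ennreal (exponential_density l x * indicator A x * exponential_density m y) \<partial>lborel \<partial>lborel)"
    using l m p by (auto intro!: nn_integral_cong mix_pointwise simp: nn_integral_cmult[symmetric] exponential_density_nonneg simp del: ennreal_plus)
  also have "\<dots> = ennreal p * (\<integral>\<^sup>+x. \<integral>\<^sup>+y. ennreal (exponential_density l x * exponential_density m y * indicator A (x + y)) \<partial>lborel \<partial>lborel)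
    + ennreal (1 - p) * (\<integral>\<^sup>+x. \<integral>\<^sup>+y. ennreal (exponential_density l x * indicator A x * exponential_density m y) \<partial>lborel \<partial>lborel)"
    by (simp add: nn_integral_add nn_integral_cmult)
  also have "(\<integral>\<^sup>+x. \<integral>\<^sup>+y. ennreal (exponential_density l x * indicator A x * exponential_density m y) \<partial>lborel \<partial>lborel) =
     (\<integral>\<^sup>+x. ennreal (exponential_density l x * indicator A x) \<partial>lborel)"
  proof (rule nn_integral_cong)
    fix x
    have "(\<integral>\<^sup>+y. ennreal (exponential_density l x * indicator A x * exponential_density m y * exp (- 0 * y)) \<partial>lborel) = ennreal (exponential_density l x * indicator A x * m / (m + 0))"
      using l m by (intro full_dens) (auto simp: exponential_density_nonneg)
    then show "(\<integral>\<^sup>+y. ennreal (exponential_density l x * indicator A x * exponential_density m y) \<partial>lborel) = ennreal (exponential_density l x * indicator A x)"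
      using m by simp
  qed
  finally show ?thesis .
qed

lemma exp_split: "exp (- x * (a + b)) = exp (- x * a) * exp (- x * (b::real))"
  by (subst exp_add[symmetric]) (simp add: algebra_simps)

lemma exp_split': "exp (- (x + y) * (a::real)) = exp (- x * a) * exp (- y * a)"
  by (subst exp_add[symmetric]) (simp add: algebra_simps)

lemma pw1:
  fixes x l1 l2 l3 i :: real
  assumes "l1 > 0" "l2 > 0" "l3 > 0"
  shows "exponential_density l1 x * i * exp (- l2 * x) * (l3 / (l3 + l2)) =
     (l1 * l3 / ((l1 + l2) * (l2 + l3))) * (exponential_density (l1 + l2) x * i)"
proof (cases "x < 0")
  case False
  have c: "exp (- l2 * x) = exp (- x * l2)" by (simp add: mult.commute)
  have "l3 + l2 > 0" "l2 + l3 > 0" "l1 + l2 > 0" using assms by auto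
  then show ?thesis
    using False unfolding exponential_density_def exp_split c by (simp add: divide_simps ac_simps)
qed (simp add: exponential_density_def)

lemma pw2:
  fixes u v l1 l2 l3 i :: real
  assumes "l1 > 0" "l2 > 0" "l3 > 0"
  shows "exponential_density l2 u * exponential_density l3 v * i * exp (- l1 * (u + v)) =
     (l2 * l3 / ((l1 + l2) * (l1 + l3))) * (exponential_density (l1 + l2) u * exponential_density (l1 + l3) v * i)"
proof (cases "u < 0 \<or> v < 0")
  case False
  have c: "exp (- l1 * (u + v)) = exp (- u * l1) * exp (- v * l1)"
    by (subst exp_add[symmetric]) (simp add: algebra_simps)
  have "l1 + l3 > 0" "l1 + l2 > 0" using assms by auto
  then show ?thesis
    using False unfolding exponential_density_def exp_split c by (simp add: divide_simps ac_simps)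
qed (auto simp add: exponential_density_def)

lemma pw3a:
  fixes x l1 l2 l3 i :: real
  assumes "l1 > 0" "l2 > 0" "l3 > 0"
  shows "exponential_density l1 x * i * (l2 / (l2 + l3)) * exp (- l2 * x) =
     (l1 * l2 * (l1 + l2 + 2 * l3) / ((l1 + l2) * (l2 + l3) * (l3 + l1)) * (1 - (l2 + l3) / (l1 + l2 + 2 * l3))) *
       (exponential_density (l1 + l2) x * i)"
proof (cases "x < 0")
  case False
  have c: "exp (- l2 * x) = exp (- x * l2)" by (simp add: mult.commute)
  have "l3 + l2 > 0" "l2 + l3 > 0" "l1 + l2 > 0" "l3 + l1 > 0" "l1 + l2 + 2 * l3 > 0" using assms by auto
  then show ?thesis
    using False unfolding exponential_density_def exp_split c by (simp add: divide_simps ac_simps)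
qed (simp add: exponential_density_def)

lemma pw3b:
  fixes y w l1 l2 l3 i :: real
  assumes "l1 > 0" "l2 > 0" "l3 > 0"
  shows "exponential_density l2 y * exponential_density l1 (y + w) * i * of_bool (0 \<le> w) * exp (- l3 * w) =
     (l1 * l2 * (l1 + l2 + 2 * l3) / ((l1 + l2) * (l2 + l3) * (l3 + l1)) * ((l2 + l3) / (l1 + l2 + 2 * l3))) *
       (exponential_density (l1 + l2) y * exponential_density (l1 + l3) w * i)"
proof (cases "y < 0 \<or> w < 0")
  case False
  have c: "exp (- l3 * w) = exp (- w * l3)" by (simp add: mult.commute)
  have "l3 + l2 > 0" "l2 + l3 > 0" "l1 + l2 > 0" "l3 + l1 > 0" "l1 + l3 > 0" "l1 + l2 + 2 * l3 > 0" using assms by auto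
  then show ?thesis
    using False unfolding exponential_density_def exp_split exp_split' c by (simp add: divide_simps ac_simps)
qed (auto simp add: exponential_density_def)

lemma ennreal_pw: "X = P * Y \<Longrightarrow> 0 \<le> P \<Longrightarrow> 0 \<le> Y \<Longrightarrow> ennreal X = ennreal P * ennreal Y"
  by (simp add: ennreal_mult)

lemma cmult2:
  fixes F :: "real \<Rightarrow> real \<Rightarrow> ennreal"
  assumes [measurable]: "case_prod F \<in> borel_measurable (lborel \<Otimes>\<^sub>M lborel)"
  shows "(\<integral>\<^sup>+u. \<integral>\<^sup>+v. c * F u v \<partial>lborel \<partial>lborel) = c * (\<integral>\<^sup>+u. \<integral>\<^sup>+v. F u v \<partial>lborel \<partial>lborel)"
proof -
  have m: "F u \<in> borel_measurable lborel" for u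
    using measurable_Pair2[OF assms, of u] by simp
  have "(\<integral>\<^sup>+u. \<integral>\<^sup>+v. c * F u v \<partial>lborel \<partial>lborel) = (\<integral>\<^sup>+u. c * \<integral>\<^sup>+v. F u v \<partial>lborel \<partial>lborel)"
    by (intro nn_integral_cong nn_integral_cmult m)
  also have "\<dots> = c * (\<integral>\<^sup>+u. \<integral>\<^sup>+v. F u v \<partial>lborel \<partial>lborel)"
    by (rule nn_integral_cmult) measurable
  finally show ?thesis .
qed

lemma finish:
  fixes M :: "'a measure" and N :: "real measure"
  assumes N: "prob_space N" "space N = UNIV" and P: "P > 0"
    and E: "\<And>A. A \<in> sets borel \<Longrightarrow> emeasure M (E A) = ennreal P * emeasure N A"
    and F: "E UNIV = F"
  shows "measure M F = P \<and> (\<forall>A\<in>sets borel. measure M (E A) / measure M F = measure N A)"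
proof -
  interpret N: prob_space N by fact
  have m: "measure M (E A) = P * measure N A" if "A \<in> sets borel" for A
    using E[OF that] P by (simp add: measure_def enn2real_mult)
  have "measure M F = P"
    using m[of UNIV] F N N.prob_space by simp
  with m P show ?thesis by simp
qed

lemma sum_law_prob: "l > 0 \<Longrightarrow> m > 0 \<Longrightarrow> prob_space (sum_law l m)"
  unfolding sum_law_def
proof (rule prob_space.prob_space_distr)
  assume "l > 0" "m > 0"
  then interpret P: pair_prob_space "exp_law l" "exp_law m"
    by (intro pair_prob_space.intro pair_sigma_finite.intro prob_space_imp_sigma_finite exp_law_prob) (auto intro: exp_law_prob simp: pair_prob_space_def)
  show "prob_space (exp_law l \<Otimes>\<^sub>M exp_law m)" by (rule P.prob_space_axioms)
  show "(\<lambda>(x, y). x + y) \<in> exp_law l \<Otimes>\<^sub>M exp_law m \<rightarrow>\<^sub>M borel" by measurable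
qed

lemma mixed_law_prob: "l > 0 \<Longrightarrow> m > 0 \<Longrightarrow> prob_space (mixed_law l m p)"
  unfolding mixed_law_def
proof (rule prob_space.prob_space_distr)
  assume "l > 0" "m > 0"
  then interpret P: pair_prob_space "exp_law m" "measure_pmf (bernoulli_pmf p)"
    by (intro pair_prob_space.intro pair_sigma_finite.intro prob_space_imp_sigma_finite exp_law_prob) (auto intro: exp_law_prob prob_space_measure_pmf simp: pair_prob_space_def)
  interpret Q: pair_prob_space "exp_law l" "exp_law m \<Otimes>\<^sub>M measure_pmf (bernoulli_pmf p)"
    using \<open>l > 0\<close> by (intro pair_prob_space.intro pair_sigma_finite.intro prob_space_imp_sigma_finite exp_law_prob P.prob_space_axioms) (auto intro: exp_law_prob P.prob_space_axioms simp: pair_prob_space_def)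
  show "prob_space (exp_law l \<Otimes>\<^sub>M (exp_law m \<Otimes>\<^sub>M measure_pmf (bernoulli_pmf p)))" by (rule Q.prob_space_axioms)
  show "(\<lambda>(x, y, b). x + (if b then 1 else 0) * y) \<in> exp_law l \<Otimes>\<^sub>M (exp_law m \<Otimes>\<^sub>M measure_pmf (bernoulli_pmf p)) \<rightarrow>\<^sub>M borel"
    by measurable
qed

lemma space_sum_law[simp]: "space (sum_law l m) = UNIV"
  by (simp add: sum_law_def)

lemma space_mixed_law[simp]: "space (mixed_law l m p) = UNIV"
  by (simp add: mixed_law_def)

theorem proposition5:
  fixes M :: "'a measure" and t_so t_sv t_vo :: "'a \<Rightarrow> real"
    and l1 l2 l3 :: real
  assumes "prob_space M"
    and "l1 > 0" and "l2 > 0" and "l3 > 0"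
    and "distributed M lborel t_so (exponential_density l1)"
    and "distributed M lborel t_sv (exponential_density l2)"
    and "distributed M lborel t_vo (exponential_density l3)"
    and "prob_space.indep_vars M (\<lambda>_. borel) (\<lambda>i. [t_so, t_sv, t_vo] ! i) {0, 1, 2}"
  defines "TT \<equiv> (\<lambda>\<omega>. infection_tree (t_so \<omega>) (t_sv \<omega>) (t_vo \<omega>))"
    and "tau_o \<equiv> (\<lambda>\<omega>. infection_time_o (t_so \<omega>) (t_sv \<omega>) (t_vo \<omega>))"
  shows "measure M {\<omega> \<in> space M. TT \<omega> = T1} = l1 * l3 / ((l1 + l2) * (l2 + l3)) \<and>
         measure M {\<omega> \<in> space M. TT \<omega> = T2} = l2 * l3 / ((l1 + l2) * (l1 + l3)) \<and>
         measure M {\<omega> \<in> space M. TT \<omega> = T3} =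
           l1 * l2 * (l1 + l2 + 2 * l3) / ((l1 + l2) * (l2 + l3) * (l3 + l1)) \<and>
         (\<forall>A \<in> sets borel.
           measure M {\<omega> \<in> space M. tau_o \<omega> \<in> A \<and> TT \<omega> = T1} / measure M {\<omega> \<in> space M. TT \<omega> = T1}
           = measure (exp_law (l1 + l2)) A) \<and>
         (\<forall>A \<in> sets borel.
           measure M {\<omega> \<in> space M. tau_o \<omega> \<in> A \<and> TT \<omega> = T2} / measure M {\<omega> \<in> space M. TT \<omega> = T2}
           = measure (sum_law (l1 + l2) (l1 + l3)) A) \<and>
         (\<forall>A \<in> sets borel.
           measure M {\<omega> \<in> space M. tau_o \<omega> \<in> A \<and> TT \<omega> = T3} / measure M {\<omega> \<in> space M. TT \<omega> = T3}
           = measure (mixed_law (l1 + l2) (l1 + l3) ((l2 + l3) / (l1 + l2 + 2 * l3))) A)"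
proof -
  interpret prob_space M by fact
  have l: "l1 > 0" "l2 > 0" "l3 > 0" by fact+
  note Da = assms(5) and Db = assms(6) and Dc = assms(7)
  have [measurable]: "t_so \<in> borel_measurable M" "t_sv \<in> borel_measurable M" "t_vo \<in> borel_measurable M"
    using Da Db Dc by (auto dest!: distributed_measurable)
  have nn: "\<And>l x. l > 0 \<Longrightarrow> 0 \<le> exponential_density l x" by (rule exponential_density_nonneg)
  note ind = assms(8)
  have j_abc: "distr M lborel t_so \<Otimes>\<^sub>M distr M (lborel \<Otimes>\<^sub>M lborel) (\<lambda>\<omega>. (t_sv \<omega>, t_vo \<omega>)) =
         distr M (lborel \<Otimes>\<^sub>M (lborel \<Otimes>\<^sub>M lborel)) (\<lambda>\<omega>. (t_so \<omega>, (t_sv \<omega>, t_vo \<omega>)))"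
    using indep_split(1)[OF ind, of 0 1 2] by simp
  have i_bc: "indep_var lborel t_sv lborel t_vo"
    using indep_split(2)[OF ind, of 0 1 2] by simp
  have j_bca: "distr M lborel t_sv \<Otimes>\<^sub>M distr M (lborel \<Otimes>\<^sub>M lborel) (\<lambda>\<omega>. (t_vo \<omega>, t_so \<omega>)) =
         distr M (lborel \<Otimes>\<^sub>M (lborel \<Otimes>\<^sub>M lborel)) (\<lambda>\<omega>. (t_sv \<omega>, (t_vo \<omega>, t_so \<omega>)))"
    using indep_split(1)[OF ind, of 1 2 0] by simp
  have i_ca: "indep_var lborel t_vo lborel t_so"
    using indep_split(2)[OF ind, of 1 2 0] by simp
  have j_bac: "distr M lborel t_sv \<Otimes>\<^sub>M distr M (lborel \<Otimes>\<^sub>M lborel) (\<lambda>\<omega>. (t_so \<omega>, t_vo \<omega>)) =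
         distr M (lborel \<Otimes>\<^sub>M (lborel \<Otimes>\<^sub>M lborel)) (\<lambda>\<omega>. (t_sv \<omega>, (t_so \<omega>, t_vo \<omega>)))"
    using indep_split(1)[OF ind, of 1 0 2] by simp
  have i_ac: "indep_var lborel t_so lborel t_vo"
    using indep_split(2)[OF ind, of 1 0 2] by simp
  define P1 where "P1 = l1 * l3 / ((l1 + l2) * (l2 + l3))"
  define P2 where "P2 = l2 * l3 / ((l1 + l2) * (l1 + l3))"
  define P3 where "P3 = l1 * l2 * (l1 + l2 + 2 * l3) / ((l1 + l2) * (l2 + l3) * (l3 + l1))"
  define p where "p = (l2 + l3) / (l1 + l2 + 2 * l3)"
  have P1: "P1 > 0" using l unfolding P1_def by simp
  have P2: "P2 > 0" using l unfolding P2_def by simp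
  have P3: "P3 > 0" using l unfolding P3_def by (simp add: add_pos_pos)
  have p: "0 \<le> p" "p \<le> 1" using l unfolding p_def by (auto simp: divide_simps)
  have E1: "emeasure M {\<omega> \<in> space M. tau_o \<omega> \<in> A \<and> TT \<omega> = T1} = ennreal P1 * emeasure (exp_law (l1 + l2)) A"
    if A[measurable]: "A \<in> sets borel" for A
  proof -
    have seq: "{\<omega> \<in> space M. tau_o \<omega> \<in> A \<and> TT \<omega> = T1} =
      {\<omega> \<in> space M. (\<lambda>x y z. min x (y + z) \<in> A \<and> x + z < y) (t_so \<omega>) (t_sv \<omega>) (t_vo \<omega>)}"
      by (rule Collect_cong) (simp add: tau_o_def TT_def infection_tree_def infection_time_o_def)
    have "emeasure M {\<omega> \<in> space M. tau_o \<omega> \<in> A \<and> TT \<omega> = T1} = (\<integral>\<^sup>+x. \<integral>\<^sup>+y. \<integral>\<^sup>+z. ennreal (exponential_density l1 x * exponential_density l2 y * exponential_density l3 z *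
            of_bool (min x (y + z) \<in> A \<and> x + z < y)) \<partial>lborel \<partial>lborel \<partial>lborel)"
      unfolding seq by (rule joint_event[where Q="\<lambda>x y z. min x (y + z) \<in> A \<and> x + z < y", OF Da Db Dc nn[OF l(1)] nn[OF l(2)] nn[OF l(3)] j_abc i_bc]) measurable
    also have "\<dots> = (\<integral>\<^sup>+x. ennreal (exponential_density l1 x * indicator A x * exp (- l2 * x) * (l3 / (l3 + l2))) \<partial>lborel)"
      by (rule L1[OF l A])
    also have "\<dots> = (\<integral>\<^sup>+x. ennreal P1 * ennreal (exponential_density (l1 + l2) x * indicator A x) \<partial>lborel)"
    proof (rule nn_integral_cong)
      fix x
      show "ennreal (exponential_density l1 x * indicator A x * exp (- l2 * x) * (l3 / (l3 + l2))) =
         ennreal P1 * ennreal (exponential_density (l1 + l2) x * indicator A x)"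
        by (rule ennreal_pw[OF pw1[OF l, folded P1_def]]) (use P1 l in \<open>auto intro!: mult_nonneg_nonneg exponential_density_nonneg\<close>)
    qed
    also have "\<dots> = ennreal P1 * (\<integral>\<^sup>+x. ennreal (exponential_density (l1 + l2) x * indicator A x) \<partial>lborel)"
      by (rule nn_integral_cmult) measurable
    also have "\<dots> = ennreal P1 * emeasure (exp_law (l1 + l2)) A"
      using l by (subst R1) auto
    finally show ?thesis .
  qed
  have E2: "emeasure M {\<omega> \<in> space M. tau_o \<omega> \<in> A \<and> TT \<omega> = T2} = ennreal P2 * emeasure (sum_law (l1 + l2) (l1 + l3)) A"
    if A[measurable]: "A \<in> sets borel" for A
  proof -
    have seq: "{\<omega> \<in> space M. tau_o \<omega> \<in> A \<and> TT \<omega> = T2} =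
      {\<omega> \<in> space M. (\<lambda>u v w. min w (u + v) \<in> A \<and> \<not> w + v < u \<and> u + v < w) (t_sv \<omega>) (t_vo \<omega>) (t_so \<omega>)}"
    proof -
      have q: "(tau_o \<omega> \<in> A \<and> TT \<omega> = T2) = (min (t_so \<omega>) (t_sv \<omega> + t_vo \<omega>) \<in> A \<and> \<not> t_so \<omega> + t_vo \<omega> < t_sv \<omega> \<and> t_sv \<omega> + t_vo \<omega> < t_so \<omega>)" for \<omega>
        by (simp add: tau_o_def TT_def infection_tree_def infection_time_o_def)
      show ?thesis unfolding q by (rule refl)
    qed
    have "emeasure M {\<omega> \<in> space M. tau_o \<omega> \<in> A \<and> TT \<omega> = T2} = (\<integral>\<^sup>+u. \<integral>\<^sup>+v. \<integral>\<^sup>+w. ennreal (exponential_density l2 u * exponential_density l3 v * exponential_density l1 w *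
            of_bool (min w (u + v) \<in> A \<and> \<not> w + v < u \<and> u + v < w)) \<partial>lborel \<partial>lborel \<partial>lborel)"
      unfolding seq by (rule joint_event[where Q="\<lambda>u v w. min w (u + v) \<in> A \<and> \<not> w + v < u \<and> u + v < w", OF Db Dc Da nn[OF l(2)] nn[OF l(3)] nn[OF l(1)] j_bca i_ca]) measurable
    also have "\<dots> = (\<integral>\<^sup>+u. \<integral>\<^sup>+v. ennreal (exponential_density l2 u * exponential_density l3 v * indicator A (u + v) * exp (- l1 * (u + v))) \<partial>lborel \<partial>lborel)"
      by (rule L2[OF l A])
    also have "\<dots> = (\<integral>\<^sup>+u. \<integral>\<^sup>+v. ennreal P2 * ennreal (exponential_density (l1 + l2) u * exponential_density (l1 + l3) v * indicator A (u + v)) \<partial>lborel \<partial>lborel)"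
    proof (intro nn_integral_cong)
      fix u v
      show "ennreal (exponential_density l2 u * exponential_density l3 v * indicator A (u + v) * exp (- l1 * (u + v))) =
         ennreal P2 * ennreal (exponential_density (l1 + l2) u * exponential_density (l1 + l3) v * indicator A (u + v))"
        by (rule ennreal_pw[OF pw2[OF l, folded P2_def]]) (use P2 l in \<open>auto intro!: mult_nonneg_nonneg exponential_density_nonneg\<close>)
    qed
    also have "\<dots> = ennreal P2 * (\<integral>\<^sup>+u. \<integral>\<^sup>+v. ennreal (exponential_density (l1 + l2) u * exponential_density (l1 + l3) v * indicator A (u + v)) \<partial>lborel \<partial>lborel)"
      by (rule cmult2) measurable
    also have "\<dots> = ennreal P2 * emeasure (sum_law (l1 + l2) (l1 + l3)) A"
      using l by (subst R2) auto
    finally show ?thesis .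
  qed
  have E3: "emeasure M {\<omega> \<in> space M. tau_o \<omega> \<in> A \<and> TT \<omega> = T3} = ennreal P3 * emeasure (mixed_law (l1 + l2) (l1 + l3) p) A"
    if A[measurable]: "A \<in> sets borel" for A
  proof -
    let ?Sa = "{\<omega> \<in> space M. (\<lambda>x y z. min x (y + z) \<in> A \<and> \<not> x + z < y \<and> \<not> y + z < x \<and> \<not> y \<le> x) (t_so \<omega>) (t_sv \<omega>) (t_vo \<omega>)}"
    let ?Sb = "{\<omega> \<in> space M. (\<lambda>y x z. min x (y + z) \<in> A \<and> \<not> x + z < y \<and> \<not> y + z < x \<and> y \<le> x) (t_sv \<omega>) (t_so \<omega>) (t_vo \<omega>)}"
    let ?I1 = "(\<integral>\<^sup>+x. ennreal (exponential_density (l1 + l2) x * indicator A x) \<partial>lborel)"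
    let ?I2 = "(\<integral>\<^sup>+x. \<integral>\<^sup>+y. ennreal (exponential_density (l1 + l2) x * exponential_density (l1 + l3) y * indicator A (x + y)) \<partial>lborel \<partial>lborel)"
    have q: "(tau_o \<omega> \<in> A \<and> TT \<omega> = T3) = (min (t_so \<omega>) (t_sv \<omega> + t_vo \<omega>) \<in> A \<and> \<not> t_so \<omega> + t_vo \<omega> < t_sv \<omega> \<and> \<not> t_sv \<omega> + t_vo \<omega> < t_so \<omega>)" for \<omega>
      by (simp add: tau_o_def TT_def infection_tree_def infection_time_o_def)
    have "{\<omega> \<in> space M. tau_o \<omega> \<in> A \<and> TT \<omega> = T3} = ?Sa \<union> ?Sb"
      unfolding q by blast
    moreover have sa: "?Sa \<in> sets M" by measurable
    moreover have sb: "?Sb \<in> sets M" by measurable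
    moreover have "?Sa \<inter> ?Sb = {}" by blast
    ultimately have split: "emeasure M {\<omega> \<in> space M. tau_o \<omega> \<in> A \<and> TT \<omega> = T3} = emeasure M ?Sa + emeasure M ?Sb"
      by (simp add: plus_emeasure)
    have ea: "emeasure M ?Sa = ennreal (P3 * (1 - p)) * ?I1"
    proof -
      have "emeasure M ?Sa = (\<integral>\<^sup>+x. \<integral>\<^sup>+y. \<integral>\<^sup>+z. ennreal (exponential_density l1 x * exponential_density l2 y * exponential_density l3 z *
            of_bool (min x (y + z) \<in> A \<and> \<not> x + z < y \<and> \<not> y + z < x \<and> \<not> y \<le> x)) \<partial>lborel \<partial>lborel \<partial>lborel)"
        by (rule joint_event[where Q="\<lambda>x y z. min x (y + z) \<in> A \<and> \<not> x + z < y \<and> \<not> y + z < x \<and> \<not> y \<le> x", OF Da Db Dc nn[OF l(1)] nn[OF l(2)] nn[OF l(3)] j_abc i_bc]) measurable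
      also have "\<dots> = (\<integral>\<^sup>+x. ennreal (exponential_density l1 x * indicator A x * (l2 / (l2 + l3)) * exp (- l2 * x)) \<partial>lborel)"
        by (rule L3a[OF l A])
      also have "\<dots> = (\<integral>\<^sup>+x. ennreal (P3 * (1 - p)) * ennreal (exponential_density (l1 + l2) x * indicator A x) \<partial>lborel)"
      proof (rule nn_integral_cong)
        fix x
        show "ennreal (exponential_density l1 x * indicator A x * (l2 / (l2 + l3)) * exp (- l2 * x)) =
          ennreal (P3 * (1 - p)) * ennreal (exponential_density (l1 + l2) x * indicator A x)"
          by (rule ennreal_pw[OF pw3a[OF l, folded P3_def p_def]]) (use P3 p l in \<open>auto intro!: mult_nonneg_nonneg exponential_density_nonneg\<close>)
      qed
      also have "\<dots> = ennreal (P3 * (1 - p)) * ?I1"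
        by (rule nn_integral_cmult) measurable
      finally show ?thesis .
    qed
    have eb: "emeasure M ?Sb = ennreal (P3 * p) * ?I2"
    proof -
      have "emeasure M ?Sb = (\<integral>\<^sup>+y. \<integral>\<^sup>+x. \<integral>\<^sup>+z. ennreal (exponential_density l2 y * exponential_density l1 x * exponential_density l3 z *
            of_bool (min x (y + z) \<in> A \<and> \<not> x + z < y \<and> \<not> y + z < x \<and> y \<le> x)) \<partial>lborel \<partial>lborel \<partial>lborel)"
        by (rule joint_event[where Q="\<lambda>y x z. min x (y + z) \<in> A \<and> \<not> x + z < y \<and> \<not> y + z < x \<and> y \<le> x", OF Db Da Dc nn[OF l(2)] nn[OF l(1)] nn[OF l(3)] j_bac i_ac]) measurable
      also have "\<dots> = (\<integral>\<^sup>+y. \<integral>\<^sup>+w. ennreal (exponential_density l2 y * exponential_density l1 (y + w) * indicator A (y + w) * of_bool (0 \<le> w) * exp (- l3 * w)) \<partial>lborel \<partial>lborel)"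
        by (rule L3b[OF l A])
      also have "\<dots> = (\<integral>\<^sup>+y. \<integral>\<^sup>+w. ennreal (P3 * p) * ennreal (exponential_density (l1 + l2) y * exponential_density (l1 + l3) w * indicator A (y + w)) \<partial>lborel \<partial>lborel)"
      proof (intro nn_integral_cong)
        fix y w
        show "ennreal (exponential_density l2 y * exponential_density l1 (y + w) * indicator A (y + w) * of_bool (0 \<le> w) * exp (- l3 * w)) =
          ennreal (P3 * p) * ennreal (exponential_density (l1 + l2) y * exponential_density (l1 + l3) w * indicator A (y + w))"
          by (rule ennreal_pw[OF pw3b[OF l, folded P3_def p_def]]) (use P3 p l in \<open>auto intro!: mult_nonneg_nonneg exponential_density_nonneg\<close>)
      qed
      also have "\<dots> = ennreal (P3 * p) * ?I2"
        by (rule cmult2) measurable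
      finally show ?thesis .
    qed
    have "emeasure M {\<omega> \<in> space M. tau_o \<omega> \<in> A \<and> TT \<omega> = T3} = ennreal (P3 * (1 - p)) * ?I1 + ennreal (P3 * p) * ?I2"
      unfolding split ea eb ..
    also have "ennreal (P3 * (1 - p)) * ?I1 + ennreal (P3 * p) * ?I2 = ennreal P3 * (ennreal p * ?I2 + ennreal (1 - p) * ?I1)"
    proof -
      have a: "ennreal (P3 * (1 - p)) = ennreal P3 * ennreal (1 - p)" using P3 p by (intro ennreal_mult) auto
      have b: "ennreal (P3 * p) = ennreal P3 * ennreal p" using P3 p by (intro ennreal_mult) auto
      show ?thesis unfolding a b distrib_left mult.assoc by (rule add.commute)
    qed
    also have "\<dots> = ennreal P3 * emeasure (mixed_law (l1 + l2) (l1 + l3) p) A"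
      using l p by (subst R3) auto
    finally show ?thesis .
  qed
  have F1: "measure M {\<omega> \<in> space M. TT \<omega> = T1} = P1 \<and>
    (\<forall>A\<in>sets borel. measure M {\<omega> \<in> space M. tau_o \<omega> \<in> A \<and> TT \<omega> = T1} / measure M {\<omega> \<in> space M. TT \<omega> = T1}
       = measure (exp_law (l1 + l2)) A)"
    by (rule finish[where E="\<lambda>A. {\<omega> \<in> space M. tau_o \<omega> \<in> A \<and> TT \<omega> = T1}"])
       (use l P1 E1 in \<open>auto intro: exp_law_prob\<close>)
  have F2: "measure M {\<omega> \<in> space M. TT \<omega> = T2} = P2 \<and>
    (\<forall>A\<in>sets borel. measure M {\<omega> \<in> space M. tau_o \<omega> \<in> A \<and> TT \<omega> = T2} / measure M {\<omega> \<in> space M. TT \<omega> = T2}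
       = measure (sum_law (l1 + l2) (l1 + l3)) A)"
    by (rule finish[where E="\<lambda>A. {\<omega> \<in> space M. tau_o \<omega> \<in> A \<and> TT \<omega> = T2}"])
       (use l P2 E2 in \<open>auto intro: sum_law_prob\<close>)
  have F3: "measure M {\<omega> \<in> space M. TT \<omega> = T3} = P3 \<and>
    (\<forall>A\<in>sets borel. measure M {\<omega> \<in> space M. tau_o \<omega> \<in> A \<and> TT \<omega> = T3} / measure M {\<omega> \<in> space M. TT \<omega> = T3}
       = measure (mixed_law (l1 + l2) (l1 + l3) p) A)"
    by (rule finish[where E="\<lambda>A. {\<omega> \<in> space M. tau_o \<omega> \<in> A \<and> TT \<omega> = T3}"])
       (use l P3 E3 in \<open>auto intro: mixed_law_prob\<close>)
  show ?thesis
    using F1 F2 F3 unfolding P1_def P2_def P3_def p_def by blast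
qed

end
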